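(* Let $k=k(N)=o(N)$ and consider the $S_k$ shuffle with boundary rates $\delta_j\in[0,1]$, $2\le j\le k-1$. There exist absolute constants $C>0$ and $c\in(0,1)$ such that for all $N$ sufficiently large and all $x\in[N]$, $P_x(\tilde\tau_{>4k}>C)\le c$.
   Context: The $S_k$ shuffle with boundary rates $(\delta_j)$: on $N$ cards, each block of $k$ consecutive positions is uniformly reshuffled at rate 1, and for each $2\le j\le k-1$ the first $j$ cards and the last $j$ cards are each uniformly reshuffled at rate $\delta_j$. Let $Z_{1,t}$ be the position at time $t$ of the card with label 1; $(Z_{1,t})_{t\ge0}$ is itself a Markov chain on $[N]$, and $P_x$ (with expectation $E_x$) denotes its law when $Z_{1,0}=x$. For $y\in[N]$, $\tilde\tau_{>y}=\inf\{t\ge0:Z_{1,t}>y\}$ and $\tilde\tau_{<y}=\inf\{t\ge0:Z_{1,t}<y\}$. *)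

theory Defs
  imports Complex_Main "HOL-Library.Landau_Symbols"
begin

text \<open>Jump rate of the position of a tagged card (label 1) in the S_k shuffle on N cards
  with boundary rates d j (2 <= j <= k-1), from position x to position y (x, y in {1..N}).
  Each k-block {i..i+k-1}, 1 <= i <= N-k+1, is uniformly reshuffled at rate 1; the first
  j and the last j cards are each uniformly reshuffled at rate d j.  A uniform reshuffle of
  a set S containing x sends the tagged card to each position of S with probability 1/|S|.\<close>
definition sk_rate :: "nat \<Rightarrow> nat \<Rightarrow> (nat \<Rightarrow> real) \<Rightarrow> nat \<Rightarrow> nat \<Rightarrow> real" where
  "sk_rate N k d x y =
     (if x = y then 0 else
        (\<Sum>i\<in>{1..N+1-k}. (if x \<in> {i..i+k-1} \<and> y \<in> {i..i+k-1} then 1 / real k else 0))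
      + (\<Sum>j\<in>{2..k-1}. d j * ((if x \<le> j \<and> y \<le> j then 1 / real j else 0)
                               + (if N+1-j \<le> x \<and> N+1-j \<le> y then 1 / real j else 0))))"

definition killed_gen :: "nat \<Rightarrow> nat \<Rightarrow> (nat \<Rightarrow> real) \<Rightarrow> nat \<Rightarrow> nat \<Rightarrow> nat \<Rightarrow> real" where
  "killed_gen N k d a x y =
     (if x \<in> {1..min a N} \<and> y \<in> {1..min a N} then
        (if x = y then - (\<Sum>z\<in>{1..N}-{x}. sk_rate N k d x z) else sk_rate N k d x y)
      else 0)"

fun killed_pow :: "nat \<Rightarrow> nat \<Rightarrow> (nat \<Rightarrow> real) \<Rightarrow> nat \<Rightarrow> nat \<Rightarrow> nat \<Rightarrow> nat \<Rightarrow> real" where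
  "killed_pow N k d a 0 x y = (if x = y then 1 else 0)"
| "killed_pow N k d a (Suc n) x y =
     (\<Sum>z\<in>{1..min a N}. killed_gen N k d a x z * killed_pow N k d a n z y)"

text \<open>P_x(tau_{>a} > t) for the continuous-time position chain Z_{1,t}:
  sum over y in A of (exp(t Q_A))(x,y), with Q_A the killed generator.\<close>
definition survival :: "nat \<Rightarrow> nat \<Rightarrow> (nat \<Rightarrow> real) \<Rightarrow> nat \<Rightarrow> real \<Rightarrow> nat \<Rightarrow> real" where
  "survival N k d a t x =
     (\<Sum>n. t ^ n / fact n * (\<Sum>y\<in>{1..min a N}. killed_pow N k d a n x y))"

end

theory Submission
  imports Defs
begin

lemma sq_sum_shift:
  "(\<Sum>z\<in>{i..<i+L}. (real z)^2) = real L * (real i)^2 + real i * real L * (real L - 1) + (real L - 1) * real L * (2 * real L - 1) / 6"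
proof (induction L)
  case 0 then show ?case by simp
next
  case (Suc L)
  have "{i..<i + Suc L} = insert (i+L) {i..<i+L}" by auto
  then have "(\<Sum>z\<in>{i..<i+Suc L}. (real z)^2) = (\<Sum>z\<in>{i..<i+L}. (real z)^2) + (real (i+L))^2" by simp
  then show ?case using Suc by (simp add: field_simps power2_eq_square)
qed

lemma lin_sum_shift:
  "(\<Sum>z\<in>{i..<i+L}. real z) = real L * real i + real L * (real L - 1) / 2"
proof (induction L)
  case 0 then show ?case by simp
next
  case (Suc L)
  have "{i..<i + Suc L} = insert (i+L) {i..<i+L}" by auto
  then have "(\<Sum>z\<in>{i..<i+Suc L}. real z) = (\<Sum>z\<in>{i..<i+L}. real z) + real (i+L)" by simp
  then show ?case using Suc by (simp add: field_simps)
qed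

lemma pascal_diff:
  fixes b :: "nat \<Rightarrow> real"
  shows "(\<Sum>m\<le>n. real (n choose m) * (-1)^m * (b (Suc m) - b m))
       = - (\<Sum>m\<le>Suc n. real (Suc n choose m) * (-1)^m * b m)"
proof -
  have "(\<Sum>m\<le>Suc n. real (Suc n choose m) * (-1)^m * b m)
      = b 0 + (\<Sum>m\<le>n. real (Suc n choose Suc m) * (-1)^(Suc m) * b (Suc m))"
    by (subst sum.atMost_Suc_shift) simp
  also have "(\<Sum>m\<le>n. real (Suc n choose Suc m) * (-1)^(Suc m) * b (Suc m))
     = (\<Sum>m\<le>n. real (n choose m) * (-1)^(Suc m) * b (Suc m))
       + (\<Sum>m\<le>n. real (n choose Suc m) * (-1)^(Suc m) * b (Suc m))"
    by (simp add: sum.distrib[symmetric] algebra_simps)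
  also have "(\<Sum>m\<le>n. real (n choose Suc m) * (-1)^(Suc m) * b (Suc m))
      = (\<Sum>m\<le>Suc n. real (n choose m) * (-1)^m * b m) - b 0"
    by (subst sum.atMost_Suc_shift) simp
  also have "(\<Sum>m\<le>Suc n. real (n choose m) * (-1)^m * b m) = (\<Sum>m\<le>n. real (n choose m) * (-1)^m * b m)"
    by simp
  finally have "(\<Sum>m\<le>Suc n. real (Suc n choose m) * (-1)^m * b m)
     = (\<Sum>m\<le>n. real (n choose m) * (-1)^(Suc m) * b (Suc m)) + (\<Sum>m\<le>n. real (n choose m) * (-1)^m * b m)"
    by simp
  moreover have "(\<Sum>m\<le>n. real (n choose m) * (-1)^m * (b (Suc m) - b m))
     = - (\<Sum>m\<le>n. real (n choose m) * (-1)^(Suc m) * b (Suc m)) - (\<Sum>m\<le>n. real (n choose m) * (-1)^m * b m)"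
    by (simp add: sum_subtractf[symmetric] sum_negf[symmetric] algebra_simps)
  ultimately show ?thesis by simp
qed

lemma exp_sums_real: "(\<lambda>n. x^n / fact n) sums exp (x::real)"
proof -
  have "(\<lambda>n. x^n /\<^sub>R fact n) sums exp x" by (rule exp_converges)
  then show ?thesis by (simp add: divide_inverse mult.commute)
qed

definition app :: "(nat \<Rightarrow> nat \<Rightarrow> real) \<Rightarrow> nat set \<Rightarrow> (nat \<Rightarrow> real) \<Rightarrow> nat \<Rightarrow> real" where
  "app Q A g x = (\<Sum>z\<in>A. Q x z * g z)"

definition Ph :: "(nat \<Rightarrow> nat \<Rightarrow> real) \<Rightarrow> nat set \<Rightarrow> real \<Rightarrow> (nat \<Rightarrow> real) \<Rightarrow> nat \<Rightarrow> real" where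
  "Ph Q A l g x = g x + app Q A g x / l"

lemma Ph_lin: "Ph Q A l (\<lambda>y. g y - c * h y) x = Ph Q A l g x - c * Ph Q A l h x"
  unfolding Ph_def app_def
  by (simp add: algebra_simps sum_subtractf sum_distrib_left diff_divide_distrib)

lemma pw_lin: "(Ph Q A l ^^ m) (\<lambda>y. g y - c * h y) = (\<lambda>y. (Ph Q A l ^^ m) g y - c * (Ph Q A l ^^ m) h y)"
proof (induction m)
  case 0 then show ?case by simp
next
  case (Suc m)
  show ?case by (rule ext) (simp add: Suc Ph_lin)
qed

lemma Ph_nonneg:
  assumes "finite A" "l > 0" "\<forall>x\<in>A. - l \<le> Q x x" "\<forall>x\<in>A. \<forall>z\<in>A. z \<noteq> x \<longrightarrow> 0 \<le> Q x z"
    and "\<forall>z\<in>A. 0 \<le> g z" "x \<in> A"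
  shows "0 \<le> Ph Q A l g x"
proof -
  have "app Q A g x = Q x x * g x + (\<Sum>z\<in>A-{x}. Q x z * g z)"
    unfolding app_def using assms(1,6) by (simp add: sum.remove)
  moreover have "0 \<le> (\<Sum>z\<in>A-{x}. Q x z * g z)"
    using assms by (intro sum_nonneg) auto
  moreover have "0 \<le> g x * (l + Q x x)" using assms by auto
  ultimately have "0 \<le> l * g x + app Q A g x" by (simp add: algebra_simps)
  then have "0 \<le> (l * g x + app Q A g x) / l" using assms(2) by simp
  also have "\<dots> = Ph Q A l g x" unfolding Ph_def using assms(2) by (simp add: field_simps)
  finally show ?thesis .
qed

lemma pw_nonneg:
  assumes "finite A" "l > 0" "\<forall>x\<in>A. - l \<le> Q x x" "\<forall>x\<in>A. \<forall>z\<in>A. z \<noteq> x \<longrightarrow> 0 \<le> Q x z"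
    and "\<forall>z\<in>A. 0 \<le> g z"
  shows "\<forall>x\<in>A. 0 \<le> (Ph Q A l ^^ m) g x"
proof (induction m)
  case 0 then show ?case using assms by simp
next
  case (Suc m)
  show ?case using Ph_nonneg[OF assms(1-4) Suc] by simp
qed

lemma pw_mono:
  assumes "finite A" "l > 0" "\<forall>x\<in>A. - l \<le> Q x x" "\<forall>x\<in>A. \<forall>z\<in>A. z \<noteq> x \<longrightarrow> 0 \<le> Q x z"
    and "\<forall>z\<in>A. g z \<le> h z" "x \<in> A"
  shows "(Ph Q A l ^^ m) g x \<le> (Ph Q A l ^^ m) h x"
proof -
  have nn: "\<forall>x\<in>A. 0 \<le> (Ph Q A l ^^ m) (\<lambda>y. h y - 1 * g y) x"
    using assms by (intro pw_nonneg[OF assms(1-4)]) auto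
  have n1: "0 \<le> (Ph Q A l ^^ m) (\<lambda>y. h y - 1 * g y) x" using nn assms(6) by blast
  have eq: "(Ph Q A l ^^ m) (\<lambda>y. h y - 1 * g y) x = (Ph Q A l ^^ m) h x - 1 * (Ph Q A l ^^ m) g x"
    by (simp only: pw_lin)
  show ?thesis using n1 unfolding eq by simp
qed

lemma abstract_bound:
  fixes Q :: "nat \<Rightarrow> nat \<Rightarrow> real" and s :: "nat \<Rightarrow> nat \<Rightarrow> real"
  assumes finA: "finite A" and lpos: "l > 0"
    and diag: "\<forall>x\<in>A. - l \<le> Q x x" and off: "\<forall>x\<in>A. \<forall>z\<in>A. z \<noteq> x \<longrightarrow> 0 \<le> Q x z"
    and row: "\<forall>x\<in>A. (\<Sum>z\<in>A. Q x z) \<le> 0"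
    and fb: "\<forall>x\<in>A. 0 \<le> f x \<and> f x \<le> M"
    and lyap: "\<forall>x\<in>A. (\<Sum>z\<in>A. Q x z * f z) \<le> -1"
    and s0: "\<forall>x\<in>A. s 0 x = 1"
    and sS: "\<forall>n. \<forall>x\<in>A. s (Suc n) x = (\<Sum>z\<in>A. Q x z * s n z)"
    and tpos: "t > 0" and xA: "x \<in> A"
  shows "(\<Sum>n. t^n / fact n * s n x) \<le> M / t"
proof -
  define P where "P = Ph Q A l"
  define b where "b m = (P ^^ m) (\<lambda>_. 1)" for m
  note base = finA lpos diag off
  have bS: "b (Suc m) y = b m y + app Q A (b m) y / l" for m y
    unfolding b_def P_def by (simp add: Ph_def)
  have app_b: "app Q A (b m) y = l * (b (Suc m) y - b m y)" for m y
    using bS[of m y] lpos by (simp add: field_simps)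
  have binom: "\<forall>y\<in>A. s n y = (-l)^n * (\<Sum>m\<le>n. real (n choose m) * (-1)^m * b m y)" for n
  proof (induction n)
    case 0 then show ?case using s0 by (simp add: b_def)
  next
    case (Suc n)
    show ?case
    proof
      fix y assume yA: "y \<in> A"
      have "s (Suc n) y = (\<Sum>z\<in>A. Q y z * ((-l)^n * (\<Sum>m\<le>n. real (n choose m) * (-1)^m * b m z)))"
        using sS yA Suc by simp
      also have "\<dots> = (-l)^n * (\<Sum>m\<le>n. real (n choose m) * (-1)^m * app Q A (b m) y)"
        unfolding app_def
        by (simp add: sum_distrib_left algebra_simps sum.swap[where A=A])
      also have "\<dots> = (-l)^n * l * (\<Sum>m\<le>n. real (n choose m) * (-1)^m * (b (Suc m) y - b m y))"
        by (simp add: app_b sum_distrib_left algebra_simps)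
      also have "\<dots> = (-l)^(Suc n) * (\<Sum>m\<le>Suc n. real (Suc n choose m) * (-1)^m * b m y)"
        unfolding pascal_diff[of n "\<lambda>m. b m y"] by (simp add: algebra_simps)
      finally show "s (Suc n) y = (-l)^(Suc n) * (\<Sum>m\<le>Suc n. real (Suc n choose m) * (-1)^m * b m y)" .
    qed
  qed
  have Pmono: "(P ^^ m) g y \<le> (P ^^ m) h y" if "\<forall>z\<in>A. g z \<le> h z" "y \<in> A" for m g h y
    unfolding P_def using pw_mono[OF base that] .
  have Pnn: "0 \<le> (P ^^ m) g y" if "\<forall>z\<in>A. 0 \<le> g z" "y \<in> A" for m g y
    unfolding P_def using pw_nonneg[OF base that(1)] that(2) by blast
  have Plin: "(P ^^ m) (\<lambda>y. g y - c * h y) y = (P ^^ m) g y - c * (P ^^ m) h y" for m g c h y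
    unfolding P_def by (simp only: pw_lin)
  have Pone: "P (\<lambda>_. 1) y \<le> 1" if "y \<in> A" for y
  proof -
    have "app Q A (\<lambda>_. 1) y \<le> 0" unfolding app_def using row that by simp
    then show ?thesis unfolding P_def Ph_def using lpos by (simp add: divide_nonpos_pos)
  qed
  have bdec: "b (Suc m) y \<le> b m y" if "y \<in> A" for m y
  proof -
    have "b (Suc m) y = (P ^^ m) (P (\<lambda>_. 1)) y" unfolding b_def by (simp only: funpow_Suc_right comp_def)
    also have "\<dots> \<le> (P ^^ m) (\<lambda>_. 1) y" using Pmono[of "P (\<lambda>_. 1)" "\<lambda>_. 1" y m] Pone that by blast
    finally show ?thesis unfolding b_def .
  qed
  have bnn: "0 \<le> b m y" if "y \<in> A" for m y
    unfolding b_def using Pnn that by simp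
  have ble: "b m y \<le> b j y" if "y \<in> A" "j \<le> m" for m j y
    using lift_Suc_antimono_le[of "\<lambda>m. b m y", OF bdec[OF that(1)] that(2)] .
  have ble1: "b m y \<le> 1" if "y \<in> A" for m y
    using ble[OF that, of 0] by (simp add: b_def)
  have Pf: "P f y \<le> f y - (1/l) * 1" if "y \<in> A" for y
  proof -
    have "app Q A f y \<le> -1" unfolding app_def using lyap that by simp
    then have "app Q A f y / l \<le> -1 / l" using lpos divide_right_mono[of "app Q A f y" "-1" l] by simp
    then show ?thesis unfolding P_def Ph_def by simp
  qed
  have lyapm: "\<forall>y\<in>A. (P ^^ m) f y + (1/l) * (\<Sum>j<m. b j y) \<le> f y" for m
  proof (induction m)
    case 0 then show ?case by simp
  next
    case (Suc m)
    show ?case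
    proof
      fix y assume yA: "y \<in> A"
      have "(P ^^ Suc m) f y = (P ^^ m) (P f) y" by (simp only: funpow_Suc_right comp_def)
      also have "\<dots> \<le> (P ^^ m) (\<lambda>y. f y - (1/l) * 1) y" using Pmono[of "P f" "\<lambda>y. f y - (1/l) * 1" y m] Pf yA by blast
      also have "\<dots> = (P ^^ m) f y - (1/l) * b m y" unfolding b_def by (rule Plin)
      finally have chain: "(P ^^ Suc m) f y \<le> (P ^^ m) f y - (1/l) * b m y" .
      have "(P ^^ m) f y + (1/l) * (\<Sum>j<m. b j y) \<le> f y" using Suc yA by blast
      moreover have "(1/l) * (\<Sum>j<Suc m. b j y) = (1/l) * (\<Sum>j<m. b j y) + (1/l) * b m y"
        by (simp add: distrib_left)
      ultimately show "(P ^^ Suc m) f y + (1/l) * (\<Sum>j<Suc m. b j y) \<le> f y" using chain by linarith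
    qed
  qed
  have bbound: "real (Suc m) * b m y \<le> l * M" if "y \<in> A" for m y
  proof -
    have "(\<Sum>j<Suc m. b m y) \<le> (\<Sum>j<Suc m. b j y)"
      by (intro sum_mono ble[OF that]) simp
    moreover have "(1/l) * (\<Sum>j<Suc m. b j y) \<le> f y"
    proof -
      have "0 \<le> (P ^^ Suc m) f y" using Pnn[of f y "Suc m"] fb that by blast
      moreover have "(P ^^ Suc m) f y + (1/l) * (\<Sum>j<Suc m. b j y) \<le> f y" using lyapm[of "Suc m"] that by blast
      ultimately show ?thesis by linarith
    qed
    then have "(\<Sum>j<Suc m. b j y) \<le> l * f y" using lpos by (simp add: field_simps)
    moreover have "l * f y \<le> l * M" using fb that lpos by simp
    ultimately show ?thesis by simp
  qed
  define a where "a i = (l*t)^i / fact i * b i x" for i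
  define e where "e j = (-(l*t))^j / fact j" for j
  have ltpos: "0 < l * t" using lpos tpos by simp
  have sexp: "summable (\<lambda>n. (l*t)^n / fact n)" using exp_sums_real sums_summable by blast
  have a_nn: "0 \<le> a i" for i unfolding a_def using bnn[OF xA] ltpos by simp
  have a_le: "a i \<le> (l*t)^i / fact i" for i
  proof -
    have "a i \<le> (l*t)^i / fact i * 1" unfolding a_def
      using ble1[OF xA] ltpos by (intro mult_left_mono) auto
    then show ?thesis by simp
  qed
  have sa: "summable (\<lambda>i. norm (a i))"
    by (rule summable_comparison_test[OF _ sexp]) (use a_nn a_le in auto)
  have sa': "summable a" using sa by (simp add: a_nn)
  have ne: "norm (e j) = (l*t)^j / fact j" for j
    unfolding e_def using ltpos by (simp add: power_abs abs_minus_cancel)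
  have se: "summable (\<lambda>j. norm (e j))" unfolding ne using sexp .
  have sume: "suminf e = exp (-(l*t))" unfolding e_def using exp_sums_real sums_unique by metis
  have termeq: "(\<Sum>i\<le>n. a i * e (n - i)) = t^n / fact n * s n x" for n
  proof -
    have "t^n / fact n * s n x = (\<Sum>i\<le>n. t^n / fact n * (-l)^n * (real (n choose i) * (-1)^i * b i x))"
      using binom xA by (simp add: sum_distrib_left mult.assoc)
    also have "\<dots> = (\<Sum>i\<le>n. a i * e (n - i))"
    proof (rule sum.cong[OF refl])
      fix i assume "i \<in> {..n}"
      then obtain r where r: "n = i + r" by (auto dest: le_Suc_ex)
      have ch: "real (n choose i) = fact n / (fact i * fact r)"
        using binomial_fact[of i n] r by simp
      have "t^n / fact n * (-l)^n * (real (n choose i) * (-1)^i * b i x)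
          = (t^n * (-l)^n * (-1)^i) / (fact i * fact r) * b i x"
        unfolding ch by (simp add: field_simps)
      also have "t^n * (-l)^n * (-1)^i = (l*t)^i * (-(l*t))^r"
      proof -
        have "(-l)^n * (-1)^i = l^n * (-1)^(i+i+r)" unfolding r
          by (simp add: power_add power_minus[of l] algebra_simps)
        also have "(-1::real)^(i+i+r) = (-1)^r" by (simp add: power_add)
        finally show ?thesis unfolding r by (simp add: power_add power_mult_distrib power_minus[of "l*t"] algebra_simps)
      qed
      also have "(l*t)^i * (-(l*t))^r / (fact i * fact r) * b i x = a i * e (n - i)"
        unfolding a_def e_def r by simp
      finally show "t^n / fact n * (-l)^n * (real (n choose i) * (-1)^i * b i x) = a i * e (n - i)" .
    qed
    finally show ?thesis by simp
  qed
  have surv: "(\<Sum>n. t^n / fact n * s n x) = suminf a * exp (-(l*t))"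
    using Cauchy_product[OF sa se] unfolding sume termeq by simp
  have a_le2: "a i \<le> (M/t) * ((l*t)^(Suc i) / fact (Suc i))" for i
  proof -
    have "real (Suc i) * b i x \<le> l * M" using bbound[OF xA] .
    then have "b i x \<le> l * M / real (Suc i)" by (simp add: field_simps)
    then have "a i \<le> (l*t)^i / fact i * (l * M / real (Suc i))"
      unfolding a_def using ltpos by (intro mult_left_mono) auto
    also have "\<dots> = (M/t) * ((l*t)^(Suc i) / fact (Suc i))"
      using tpos by (simp add: field_simps)
    finally show ?thesis .
  qed
  have sexp1: "summable (\<lambda>i. (l*t)^(Suc i) / fact (Suc i))" using summable_Suc_iff[of "\<lambda>n. (l*t)^n / fact n"] sexp by simp
  have "suminf a \<le> (\<Sum>i. (M/t) * ((l*t)^(Suc i) / fact (Suc i)))"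
    by (rule suminf_le[OF a_le2 sa']) (rule summable_mult[OF sexp1])
  also have "\<dots> = (M/t) * (\<Sum>i. (l*t)^(Suc i) / fact (Suc i))"
    by (rule suminf_mult[OF sexp1])
  also have "(\<Sum>i. (l*t)^(Suc i) / fact (Suc i)) = exp (l*t) - 1"
    using suminf_split_head[OF sexp] sums_unique[OF exp_sums_real[of "l*t"]] by simp
  finally have "suminf a \<le> (M/t) * (exp (l*t) - 1)" .
  moreover have "0 \<le> M" using fb xA by (meson order_trans)
  ultimately have "suminf a \<le> (M/t) * exp (l*t)" using tpos
  proof -
    have "0 \<le> M/t" using \<open>0 \<le> M\<close> tpos by simp
    then have "(M/t) * (exp (l*t) - 1) \<le> (M/t) * exp (l*t)" by (intro mult_left_mono) auto
    then show ?thesis using \<open>suminf a \<le> (M/t) * (exp (l*t) - 1)\<close> by linarith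
  qed
  then have "suminf a * exp (-(l*t)) \<le> (M/t) * exp (l*t) * exp (-(l*t))"
    by (intro mult_right_mono) auto
  also have "\<dots> = M/t" by (simp add: mult.assoc exp_minus_inverse)
  finally show ?thesis unfolding surv .
qed

definition Rr :: "nat \<Rightarrow> nat \<Rightarrow> (nat \<Rightarrow> real) \<Rightarrow> nat \<Rightarrow> nat \<Rightarrow> real" where
  "Rr N k d x y =
        (\<Sum>i\<in>{1..N+1-k}. (if x \<in> {i..i+k-1} \<and> y \<in> {i..i+k-1} then 1 / real k else 0))
      + (\<Sum>j\<in>{2..k-1}. d j * ((if x \<le> j \<and> y \<le> j then 1 / real j else 0)
                               + (if N+1-j \<le> x \<and> N+1-j \<le> y then 1 / real j else 0)))"

lemma sk_rate_Rr: "sk_rate N k d x y = (if x = y then 0 else Rr N k d x y)"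
  unfolding sk_rate_def Rr_def by simp

lemma Rr_nonneg:
  assumes "\<forall>j\<in>{2..k-1}. 0 \<le> d j"
  shows "0 \<le> Rr N k d x y"
  unfolding Rr_def using assms by (intro add_nonneg_nonneg sum_nonneg mult_nonneg_nonneg) auto

lemma sk_rate_nonneg:
  assumes "\<forall>j\<in>{2..k-1}. 0 \<le> d j"
  shows "0 \<le> sk_rate N k d x y"
  using Rr_nonneg[OF assms] by (simp add: sk_rate_Rr)

lemma Rr_small:
  assumes "2 \<le> k" "6 * k \<le> N" "x \<le> 4 * k"
  shows "Rr N k d x y =
        (\<Sum>i\<in>{1..N+1-k}. (if x \<in> {i..i+k-1} \<and> y \<in> {i..i+k-1} then 1 / real k else 0))
      + (\<Sum>j\<in>{2..k-1}. d j * (if x \<le> j \<and> y \<le> j then 1 / real j else 0))"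
proof -
  have "(\<Sum>j\<in>{2..k-1}. d j * ((if x \<le> j \<and> y \<le> j then 1 / real j else 0)
                               + (if N+1-j \<le> x \<and> N+1-j \<le> y then 1 / real j else 0)))
      = (\<Sum>j\<in>{2..k-1}. d j * (if x \<le> j \<and> y \<le> j then 1 / real j else 0))"
  proof (rule sum.cong[OF refl])
    fix j assume "j \<in> {2..k-1}"
    then have "\<not> (N+1-j \<le> x)" using assms by auto
    then show "d j * ((if x \<le> j \<and> y \<le> j then 1 / real j else 0)
                               + (if N+1-j \<le> x \<and> N+1-j \<le> y then 1 / real j else 0))
          = d j * (if x \<le> j \<and> y \<le> j then 1 / real j else 0)" by simp
  qed
  then show ?thesis unfolding Rr_def by simp
qed

definition fq :: "nat \<Rightarrow> nat \<Rightarrow> real" where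
  "fq k z = 12 * (25 - (real z)^2 / (real k)^2)"

lemma fq_nonneg: "k > 0 \<Longrightarrow> z \<le> 5 * k \<Longrightarrow> 0 \<le> fq k z"
proof -
  assume k: "k > 0" and z: "z \<le> 5 * k"
  have "real z \<le> 5 * real k" using z by simp
  then have "(real z)^2 \<le> (5 * real k)^2" by (intro power_mono) auto
  then have "(real z)^2 / (real k)^2 \<le> 25" using k by (simp add: field_simps power_mult_distrib)
  then show ?thesis unfolding fq_def by simp
qed

lemma fq_le: "fq k z \<le> 300" unfolding fq_def by simp

lemma gen_as_R:
  assumes k2: "2 \<le> k" and Nk: "6 * k \<le> N" and x: "x \<in> {1..4*k}"
  shows "(\<Sum>z\<in>{1..4*k}. killed_gen N k d (4*k) x z * g z)
       = (\<Sum>z\<in>{1..N}. Rr N k d x z * ((if z \<in> {1..4*k} then g z else 0) - g x))"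
proof -
  let ?A = "{1..4*k}"
  define F where "F z = (if z \<in> ?A then g z else 0)" for z
  define T where "T = (\<Sum>w\<in>{1..N}-{x}. sk_rate N k d x w)"
  have mn: "min (4*k) N = 4*k" using Nk by simp
  have AN: "?A \<subseteq> {1..N}" using Nk by auto
  have kg: "killed_gen N k d (4*k) x z = (if z = x then - T else sk_rate N k d x z)" if "z \<in> ?A" for z
    unfolding killed_gen_def T_def mn using x that by simp
  have "(\<Sum>z\<in>?A. killed_gen N k d (4*k) x z * g z) = (\<Sum>z\<in>?A. (if z = x then - T * g x else sk_rate N k d x z * g z))"
    by (rule sum.cong[OF refl]) (simp add: kg)
  also have "\<dots> = - T * g x + (\<Sum>z\<in>?A-{x}. sk_rate N k d x z * g z)"
    using x by (simp add: sum.remove)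
  also have "(\<Sum>z\<in>?A-{x}. sk_rate N k d x z * g z) = (\<Sum>z\<in>{1..N}-{x}. sk_rate N k d x z * F z)"
    by (rule sum.mono_neutral_cong_left) (use AN in \<open>auto simp: F_def\<close>)
  also have "- T * g x + (\<Sum>z\<in>{1..N}-{x}. sk_rate N k d x z * F z)
       = (\<Sum>z\<in>{1..N}-{x}. sk_rate N k d x z * (F z - g x))"
  proof -
    have e1: "(\<Sum>z\<in>{1..N}-{x}. sk_rate N k d x z * (F z - g x))
       = (\<Sum>z\<in>{1..N}-{x}. sk_rate N k d x z * F z) - (\<Sum>z\<in>{1..N}-{x}. sk_rate N k d x z * g x)"
      by (simp only: right_diff_distrib sum_subtractf)
    have e2: "(\<Sum>z\<in>{1..N}-{x}. sk_rate N k d x z * g x) = T * g x"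
      unfolding T_def by (simp only: sum_distrib_right)
    show ?thesis using e1 e2 by simp
  qed
  also have "\<dots> = (\<Sum>z\<in>{1..N}-{x}. Rr N k d x z * (F z - g x))"
    by (rule sum.cong[OF refl]) (simp add: sk_rate_Rr)
  also have "\<dots> = (\<Sum>z\<in>{1..N}. Rr N k d x z * (F z - g x))"
  proof -
    have "x \<in> {1..N}" using x AN by auto
    moreover have "F x - g x = 0" using x by (simp add: F_def)
    ultimately show ?thesis by (simp add: sum.remove)
  qed
  finally show ?thesis unfolding F_def .
qed

lemma R_bound:
  assumes k2: "2 \<le> k" and Nk: "6 * k \<le> N" and x: "x \<le> 4 * k"
    and dnn: "\<forall>j\<in>{2..k-1}. 0 \<le> d j"
    and hle: "\<forall>z. z \<le> 5 * k \<longrightarrow> hh z \<le> gg z"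
  shows "(\<Sum>z\<in>{1..N}. Rr N k d x z * hh z)
    \<le> (\<Sum>i\<in>{1..N+1-k}. if x \<in> {i..i+k-1} then (1 / real k) * (\<Sum>z\<in>{i..i+k-1}. gg z) else 0)
      + (\<Sum>j\<in>{2..k-1}. d j * (if x \<le> j then (1 / real j) * (\<Sum>z\<in>{1..j}. gg z) else 0))"
proof -
  define I where "I i z = (if x \<in> {i..i+k-1} \<and> z \<in> {i..i+k-1} then 1 / real k else 0)" for i z
  define J where "J j z = d j * (if x \<le> j \<and> z \<le> j then 1 / real j else 0)" for j z
  have pt: "Rr N k d x z * hh z \<le> (\<Sum>i\<in>{1..N+1-k}. I i z * gg z) + (\<Sum>j\<in>{2..k-1}. J j z * gg z)"
    if "z \<in> {1..N}" for z
  proof -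
    have "Rr N k d x z * hh z = (\<Sum>i\<in>{1..N+1-k}. I i z * hh z) + (\<Sum>j\<in>{2..k-1}. J j z * hh z)"
      unfolding Rr_small[OF k2 Nk x] I_def J_def by (simp add: sum_distrib_right distrib_right)
    also have "\<dots> \<le> (\<Sum>i\<in>{1..N+1-k}. I i z * gg z) + (\<Sum>j\<in>{2..k-1}. J j z * gg z)"
    proof (intro add_mono sum_mono)
      fix i assume "i \<in> {1..N+1-k}"
      show "I i z * hh z \<le> I i z * gg z"
      proof (cases "x \<in> {i..i+k-1} \<and> z \<in> {i..i+k-1}")
        case True
        then have "z \<le> 5 * k" using x by auto
        then show ?thesis using hle True unfolding I_def by (simp add: divide_right_mono)
      next
        case False
        then have "I i z = 0" unfolding I_def by argo
        then show ?thesis by simp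
      qed
    next
      fix j assume j: "j \<in> {2..k-1}"
      show "J j z * hh z \<le> J j z * gg z"
      proof (cases "x \<le> j \<and> z \<le> j")
        case True
        then have "z \<le> 5 * k" using j by auto
        then have "hh z \<le> gg z" using hle by blast
        moreover have "0 \<le> J j z" using dnn j unfolding J_def by simp
        ultimately show ?thesis by (simp add: mult_left_mono)
      next
        case False
        then have "J j z = 0" unfolding J_def by (subst if_not_P[OF False]) simp
        then show ?thesis by simp
      qed
    qed
    finally show ?thesis .
  qed
  have "(\<Sum>z\<in>{1..N}. Rr N k d x z * hh z)
     \<le> (\<Sum>z\<in>{1..N}. (\<Sum>i\<in>{1..N+1-k}. I i z * gg z) + (\<Sum>j\<in>{2..k-1}. J j z * gg z))"
    using pt by (intro sum_mono) auto
  also have "\<dots> = (\<Sum>i\<in>{1..N+1-k}. \<Sum>z\<in>{1..N}. I i z * gg z) + (\<Sum>j\<in>{2..k-1}. \<Sum>z\<in>{1..N}. J j z * gg z)"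
    by (simp only: sum.distrib sum.swap[of _ "{1..N}"])
  also have "(\<Sum>i\<in>{1..N+1-k}. \<Sum>z\<in>{1..N}. I i z * gg z)
      = (\<Sum>i\<in>{1..N+1-k}. if x \<in> {i..i+k-1} then (1 / real k) * (\<Sum>z\<in>{i..i+k-1}. gg z) else 0)"
  proof (rule sum.cong[OF refl])
    fix i assume i: "i \<in> {1..N+1-k}"
    have sub: "{i..i+k-1} \<subseteq> {1..N}" using i k2 Nk by auto
    have "(\<Sum>z\<in>{1..N}. I i z * gg z) = (\<Sum>z\<in>{1..N}. if z \<in> {i..i+k-1} then (if x \<in> {i..i+k-1} then 1 / real k else 0) * gg z else 0)"
      unfolding I_def by (rule sum.cong[OF refl]) auto
    also have "\<dots> = (\<Sum>z\<in>{1..N} \<inter> {i..i+k-1}. (if x \<in> {i..i+k-1} then 1 / real k else 0) * gg z)"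
      by (rule sum.inter_restrict[symmetric]) simp
    also have "{1..N} \<inter> {i..i+k-1} = {i..i+k-1}" using sub by blast
    finally show "(\<Sum>z\<in>{1..N}. I i z * gg z) = (if x \<in> {i..i+k-1} then (1 / real k) * (\<Sum>z\<in>{i..i+k-1}. gg z) else 0)"
      by (simp add: sum_distrib_left)
  qed
  also have "(\<Sum>j\<in>{2..k-1}. \<Sum>z\<in>{1..N}. J j z * gg z)
      = (\<Sum>j\<in>{2..k-1}. d j * (if x \<le> j then (1 / real j) * (\<Sum>z\<in>{1..j}. gg z) else 0))"
  proof (rule sum.cong[OF refl])
    fix j assume j: "j \<in> {2..k-1}"
    have sub: "{1..j} \<subseteq> {1..N}" using j k2 Nk by auto
    have "(\<Sum>z\<in>{1..N}. J j z * gg z) = (\<Sum>z\<in>{1..N}. if z \<in> {1..j} then d j * (if x \<le> j then 1 / real j else 0) * gg z else 0)"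
      unfolding J_def by (rule sum.cong[OF refl]) auto
    also have "\<dots> = (\<Sum>z\<in>{1..N} \<inter> {1..j}. d j * (if x \<le> j then 1 / real j else 0) * gg z)"
      by (rule sum.inter_restrict[symmetric]) simp
    also have "{1..N} \<inter> {1..j} = {1..j}" using sub by blast
    finally show "(\<Sum>z\<in>{1..N}. J j z * gg z) = d j * (if x \<le> j then (1 / real j) * (\<Sum>z\<in>{1..j}. gg z) else 0)"
      by (simp add: sum_distrib_left mult.assoc)
  qed
  finally show ?thesis .
qed

lemma gg_sum:
  assumes "k > 0"
  shows "(\<Sum>z\<in>{i..i+k-1}. fq k z - fq k x) = 12 / (real k)^2 * (real k * (real x)^2
     - (real k * (real i)^2 + real i * real k * (real k - 1) + (real k - 1) * real k * (2 * real k - 1) / 6))"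
proof -
  have iv: "{i..i+k-1} = {i..<i+k}" using assms by auto
  have "(\<Sum>z\<in>{i..<i+k}. fq k z - fq k x) = (\<Sum>z\<in>{i..<i+k}. 12 / (real k)^2 * ((real x)^2 - (real z)^2))"
    unfolding fq_def using assms by (intro sum.cong) (auto simp: field_simps)
  also have "\<dots> = 12 / (real k)^2 * (\<Sum>z\<in>{i..<i+k}. ((real x)^2 - (real z)^2))"
    by (rule sum_distrib_left[symmetric])
  also have "(\<Sum>z\<in>{i..<i+k}. ((real x)^2 - (real z)^2)) = real k * (real x)^2 - (\<Sum>z\<in>{i..<i+k}. (real z)^2)"
    by (simp add: sum_subtractf)
  finally show ?thesis unfolding iv sq_sum_shift .
qed

lemma gg_sum1:
  assumes "k > 0"
  shows "(\<Sum>z\<in>{1..j}. fq k z - fq k x) = 12 / (real k)^2 * (real j * (real x)^2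
     - (real j + real j * (real j - 1) + (real j - 1) * real j * (2 * real j - 1) / 6))"
proof -
  have iv: "{1..j} = {1..<1+j}" by auto
  have "(\<Sum>z\<in>{1..<1+j}. fq k z - fq k x) = (\<Sum>z\<in>{1..<1+j}. 12 / (real k)^2 * ((real x)^2 - (real z)^2))"
    unfolding fq_def using assms by (intro sum.cong) (auto simp: field_simps)
  also have "\<dots> = 12 / (real k)^2 * (\<Sum>z\<in>{1..<1+j}. ((real x)^2 - (real z)^2))"
    by (rule sum_distrib_left[symmetric])
  also have "(\<Sum>z\<in>{1..<1+j}. ((real x)^2 - (real z)^2)) = real j * (real x)^2 - (\<Sum>z\<in>{1..<1+j}. (real z)^2)"
    by (simp add: sum_subtractf)
  finally show ?thesis unfolding iv sq_sum_shift by simp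
qed

lemma block_total:
  assumes "k > 0"
  shows "(\<Sum>i\<in>{c..<c+L}. (1 / real k) * (\<Sum>z\<in>{i..i+k-1}. fq k z - fq k x))
    = 12 / (real k)^3 * (real L * real k * (real x)^2
       - real k * (real L * (real c)^2 + real c * real L * (real L - 1) + (real L - 1) * real L * (2 * real L - 1) / 6)
       - real k * (real k - 1) * (real L * real c + real L * (real L - 1) / 2)
       - real L * ((real k - 1) * real k * (2 * real k - 1) / 6))"
proof -
  define K where "K = real k"
  define X where "X = real x"
  have Kp: "K > 0" using assms K_def by simp
  define \<gamma> where "\<gamma> = 12 / K^3"
  have eq: "(1 / real k) * (\<Sum>z\<in>{i..i+k-1}. fq k z - fq k x)
     = \<gamma> * (K * X^2 - (K - 1) * K * (2 * K - 1) / 6) - \<gamma> * K * (real i)^2 - \<gamma> * (K * (K - 1)) * real i" for i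
    unfolding gg_sum[OF assms] K_def[symmetric] X_def[symmetric] \<gamma>_def using Kp
    by (simp add: field_simps power2_eq_square power3_eq_cube)
  have "(\<Sum>i\<in>{c..<c+L}. (1 / real k) * (\<Sum>z\<in>{i..i+k-1}. fq k z - fq k x))
     = real L * (\<gamma> * (K * X^2 - (K - 1) * K * (2 * K - 1) / 6)) - \<gamma> * K * (\<Sum>i\<in>{c..<c+L}. (real i)^2)
       - \<gamma> * (K * (K - 1)) * (\<Sum>i\<in>{c..<c+L}. real i)"
    unfolding eq by (simp add: sum_subtractf sum_distrib_left)
  also have "\<dots> = \<gamma> * (real L * K * X^2
       - K * (real L * (real c)^2 + real c * real L * (real L - 1) + (real L - 1) * real L * (2 * real L - 1) / 6)
       - K * (K - 1) * (real L * real c + real L * (real L - 1) / 2)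
       - real L * ((K - 1) * K * (2 * K - 1) / 6))"
    unfolding sq_sum_shift lin_sum_shift by (simp add: algebra_simps)
  finally show ?thesis unfolding K_def X_def \<gamma>_def .
qed

lemma bnd_term:
  assumes k: "k > 0" and xj: "x \<le> j" and j1: "1 \<le> j" and d0: "0 \<le> dj" and d1: "dj \<le> 1"
  shows "dj * ((1 / real j) * (\<Sum>z\<in>{1..j}. fq k z - fq k x)) \<le> 8 * (real x)^2 / (real k)^2"
proof -
  define J where "J = real j"
  define X where "X = real x"
  define K where "K = real k"
  have Jp: "J \<ge> 1" using j1 J_def by simp
  have XJ: "X \<le> J" using xj X_def J_def by simp
  have X0: "0 \<le> X" using X_def by simp
  have Kp: "K > 0" using k K_def by simp
  have "(1 / real j) * (\<Sum>z\<in>{1..j}. fq k z - fq k x) = (12 / K^2) * (X^2 - (2*J^2 + 3*J + 1) / 6)"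
    unfolding gg_sum1[OF k] J_def[symmetric] X_def[symmetric] K_def[symmetric] using Jp Kp
    by (simp add: field_simps power2_eq_square)
  also have "\<dots> \<le> (12 / K^2) * (X^2 - X^2 / 3)"
  proof -
    have "X^2 \<le> J^2" using XJ X0 by (intro power_mono) auto
    then have "X^2 / 3 \<le> (2*J^2 + 3*J + 1) / 6" using Jp by (simp add: field_simps)
    then show ?thesis using Kp by (intro mult_left_mono) auto
  qed
  also have "\<dots> = 8 * X^2 / K^2" by (simp add: field_simps)
  finally have v: "(1 / real j) * (\<Sum>z\<in>{1..j}. fq k z - fq k x) \<le> 8 * X^2 / K^2" .
  have nn: "0 \<le> 8 * X^2 / K^2" by simp
  show ?thesis
  proof (cases "0 \<le> (1 / real j) * (\<Sum>z\<in>{1..j}. fq k z - fq k x)")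
    case True
    then have "dj * ((1 / real j) * (\<Sum>z\<in>{1..j}. fq k z - fq k x)) \<le> 1 * ((1 / real j) * (\<Sum>z\<in>{1..j}. fq k z - fq k x))"
      using d1 by (intro mult_right_mono) auto
    then show ?thesis using v unfolding X_def K_def by simp
  next
    case False
    then have "(1 / real j) * (\<Sum>z\<in>{1..j}. fq k z - fq k x) \<le> 0" by simp
    then have "dj * ((1 / real j) * (\<Sum>z\<in>{1..j}. fq k z - fq k x)) \<le> 0"
      using mult_nonneg_nonpos[OF d0] by blast
    then show ?thesis using nn unfolding X_def K_def by linarith
  qed
qed

lemma arith_small:
  fixes X K :: real
  assumes "1 \<le> X" "X + 1 \<le> K"
  shows "12 / K^3 * (X * K * X^2
       - K * (X * 1^2 + 1 * X * (X - 1) + (X - 1) * X * (2 * X - 1) / 6)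
       - K * (K - 1) * (X * 1 + X * (X - 1) / 2)
       - X * ((K - 1) * K * (2 * K - 1) / 6)) + (K - X) * (8 * X^2 / K^2) \<le> -1"
proof -
  have Kp: "K > 0" using assms by simp
  have e: "12 / K^3 * (X * K * X^2
       - K * (X * 1^2 + 1 * X * (X - 1) + (X - 1) * X * (2 * X - 1) / 6)
       - K * (K - 1) * (X * 1 + X * (X - 1) / 2)
       - X * ((K - 1) * K * (2 * K - 1) / 6)) + (K - X) * (8 * X^2 / K^2)
     = 2 * X * (K * X - 2 * K^2 + 1) / K^2"
    using Kp by (simp add: field_simps power2_eq_square power3_eq_cube)
  have neg: "K * X - 2 * K^2 + 1 \<le> 1 - K -(K^2)"
  proof -
    have "K * X \<le> K * (K - 1)" using assms Kp by (intro mult_left_mono) auto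
    then show ?thesis by (simp add: power2_eq_square algebra_simps)
  qed
  have KK: "2 * K \<le> K * K" using assms by (intro mult_right_mono) auto
  have negs: "1 - K -(K^2) < 0" using assms KK unfolding power2_eq_square by linarith
  have "2 * X * (K * X - 2 * K^2 + 1) \<le> 2 * 1 * (K * X - 2 * K^2 + 1)"
    using assms neg negs by (intro mult_right_mono_neg mult_left_mono) auto
  also have "\<dots> \<le> 2 * (1 - K -(K^2))" using neg by simp
  also have "\<dots> \<le> -(K^2)"
  proof -
    have "2 * K \<ge> 2" using assms by simp
    moreover have "K^2 \<ge> 0" by simp
    moreover have "2 * (1 - K - K^2) = 2 - 2 * K - 2 * K^2" by (simp add: algebra_simps)
    ultimately show ?thesis by linarith
  qed
  finally have "2 * X * (K * X - 2 * K^2 + 1) \<le> -(K^2)" .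
  then have "2 * X * (K * X - 2 * K^2 + 1) / K^2 \<le> -(K^2) / K^2" using Kp by (intro divide_right_mono) auto
  then show ?thesis unfolding e using Kp by simp
qed

lemma arith_big:
  fixes X K :: real
  assumes "2 \<le> K"
  shows "12 / K^3 * (K * K * X^2
       - K * (K * (X + 1 - K)^2 + (X + 1 - K) * K * (K - 1) + (K - 1) * K * (2 * K - 1) / 6)
       - K * (K - 1) * (K * (X + 1 - K) + K * (K - 1) / 2)
       - K * ((K - 1) * K * (2 * K - 1) / 6)) \<le> -1"
proof -
  have Kp: "K > 0" using assms by simp
  have e: "12 / K^3 * (K * K * X^2
       - K * (K * (X + 1 - K)^2 + (X + 1 - K) * K * (K - 1) + (K - 1) * K * (2 * K - 1) / 6)
       - K * (K - 1) * (K * (X + 1 - K) + K * (K - 1) / 2)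
       - K * ((K - 1) * K * (2 * K - 1) / 6)) = - 2 * (K^2 - 1) / K"
    using Kp by (simp add: field_simps power2_eq_square power3_eq_cube)
  have KK: "2 * K \<le> K * K" using assms by (intro mult_right_mono) auto
  have "K \<le> 2 * (K * K) - 2" using assms KK by linarith
  then have "K \<le> 2 * (K^2 - 1)" by (simp add: power2_eq_square)
  then have h: "1 \<le> 2 * (K^2 - 1) / K" using Kp by (simp add: field_simps)
  have "- 2 * (K^2 - 1) / K = -(2 * (K^2 - 1) / K)" by (simp only: mult_minus_left minus_divide_left)
  then show ?thesis unfolding e using h by linarith
qed

lemma drift:
  assumes k2: "2 \<le> k" and Nk: "6 * k \<le> N" and x: "x \<in> {1..4*k}"
    and dnn: "\<forall>j\<in>{2..k-1}. 0 \<le> d j" and d1: "\<forall>j\<in>{2..k-1}. d j \<le> 1"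
  shows "(\<Sum>z\<in>{1..4*k}. killed_gen N k d (4*k) x z * fq k z) \<le> -1"
proof -
  have kp: "k > 0" using k2 by simp
  define Blk where "Blk = (\<Sum>i\<in>{1..N+1-k}. if x \<in> {i..i+k-1} then (1 / real k) * (\<Sum>z\<in>{i..i+k-1}. fq k z - fq k x) else 0)"
  define Bnd where "Bnd = (\<Sum>j\<in>{2..k-1}. d j * (if x \<le> j then (1 / real j) * (\<Sum>z\<in>{1..j}. fq k z - fq k x) else 0))"
  have "(\<Sum>z\<in>{1..4*k}. killed_gen N k d (4*k) x z * fq k z)
      = (\<Sum>z\<in>{1..N}. Rr N k d x z * ((if z \<in> {1..4*k} then fq k z else 0) - fq k x))"
    by (rule gen_as_R[OF k2 Nk x])
  also have "\<dots> \<le> Blk + Bnd" unfolding Blk_def Bnd_def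
  proof (rule R_bound[OF k2 Nk _ dnn])
    show "x \<le> 4 * k" using x by simp
    show "\<forall>z. z \<le> 5 * k \<longrightarrow> (if z \<in> {1..4*k} then fq k z else 0) - fq k x \<le> fq k z - fq k x"
      using fq_nonneg[OF kp] by auto
  qed
  finally have main: "(\<Sum>z\<in>{1..4*k}. killed_gen N k d (4*k) x z * fq k z) \<le> Blk + Bnd" .
  define Ix where "Ix = {i\<in>{1..N+1-k}. x \<in> {i..i+k-1}}"
  have Blk2: "Blk = (\<Sum>i\<in>Ix. (1 / real k) * (\<Sum>z\<in>{i..i+k-1}. fq k z - fq k x))"
    unfolding Blk_def Ix_def by (rule sum.inter_filter[symmetric]) simp
  define S where "S = {j\<in>{2..k-1}. x \<le> j}"
  have Bnd2: "Bnd \<le> real (card S) * (8 * (real x)^2 / (real k)^2)"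
  proof -
    have "Bnd \<le> (\<Sum>j\<in>{2..k-1}. if x \<le> j then 8 * (real x)^2 / (real k)^2 else 0)"
      unfolding Bnd_def
    proof (rule sum_mono)
      fix j assume j: "j \<in> {2..k-1}"
      show "d j * (if x \<le> j then (1 / real j) * (\<Sum>z\<in>{1..j}. fq k z - fq k x) else 0)
          \<le> (if x \<le> j then 8 * (real x)^2 / (real k)^2 else 0)"
        using bnd_term[OF kp _ _ _ _, of x j "d j"] j dnn d1 by auto
    qed
    also have "\<dots> = (\<Sum>j\<in>S. 8 * (real x)^2 / (real k)^2)"
      unfolding S_def by (rule sum.inter_filter[symmetric]) simp
    also have "\<dots> = real (card S) * (8 * (real x)^2 / (real k)^2)" by simp
    finally show ?thesis .
  qed
  show ?thesis
  proof (cases "x < k")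
    case True
    have IxE: "Ix = {1..<1+x}" unfolding Ix_def using True Nk x by auto
    have "Blk = 12 / (real k)^3 * (real x * real k * (real x)^2
       - real k * (real x * (real (1::nat))^2 + real (1::nat) * real x * (real x - 1) + (real x - 1) * real x * (2 * real x - 1) / 6)
       - real k * (real k - 1) * (real x * real (1::nat) + real x * (real x - 1) / 2)
       - real x * ((real k - 1) * real k * (2 * real k - 1) / 6))"
      unfolding Blk2 IxE by (rule block_total[OF kp])
    moreover have "card S \<le> k - x"
    proof -
      have "S \<subseteq> {x..<k}" unfolding S_def by auto
      then have "card S \<le> card {x..<k}" by (intro card_mono) auto
      then show ?thesis by simp
    qed
    then have "real (card S) \<le> real k - real x" using True by linarith
    then have "Bnd \<le> (real k - real x) * (8 * (real x)^2 / (real k)^2)"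
      using Bnd2 by (smt (verit) mult_right_mono zero_le_divide_iff zero_le_power2 mult_nonneg_nonneg)
    moreover have "1 \<le> real x" "real x + 1 \<le> real k" using x True by auto
    ultimately have "Blk + Bnd \<le> -1" using arith_small[of "real x" "real k"] by simp
    then show ?thesis using main by linarith
  next
    case False
    have IxE: "Ix = {x+1-k..<x+1-k+k}" unfolding Ix_def using False Nk x by auto
    have rc: "real (x+1-k) = real x + 1 - real k" using False by simp
    have "Blk = 12 / (real k)^3 * (real k * real k * (real x)^2
       - real k * (real k * (real (x+1-k))^2 + real (x+1-k) * real k * (real k - 1) + (real k - 1) * real k * (2 * real k - 1) / 6)
       - real k * (real k - 1) * (real k * real (x+1-k) + real k * (real k - 1) / 2)
       - real k * ((real k - 1) * real k * (2 * real k - 1) / 6))"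
      unfolding Blk2 IxE by (rule block_total[OF kp])
    then have "Blk \<le> -1" unfolding rc using arith_big[of "real k" "real x"] k2 by simp
    moreover have "S = {}" unfolding S_def using False by auto
    then have "Bnd \<le> 0" using Bnd2 by simp
    ultimately show ?thesis using main by linarith
  qed
qed

lemma main_N:
  assumes k2: "2 \<le> k" and Nk: "6 * k \<le> N"
    and dnn: "\<forall>j\<in>{2..k-1}. 0 \<le> d j" and d1: "\<forall>j\<in>{2..k-1}. d j \<le> 1"
    and xN: "x \<in> {1..N}"
  shows "survival N k d (4 * k) 600 x \<le> 1/2"
proof -
  have mn: "min (4*k) N = 4*k" using Nk by simp
  let ?A = "{1..4*k}"
  define s where "s n y = (\<Sum>w\<in>?A. killed_pow N k d (4*k) n y w)" for n y
  have surv: "survival N k d (4 * k) 600 x = (\<Sum>n. 600^n / fact n * s n x)"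
    unfolding survival_def s_def mn by simp
  show ?thesis
  proof (cases "x \<in> ?A")
    case False
    have "killed_pow N k d (4*k) n x w = 0" if "w \<in> ?A" for n w
    proof (cases n)
      case 0 then show ?thesis using False that by auto
    next
      case (Suc m)
      have "killed_gen N k d (4*k) x z = 0" for z using False mn unfolding killed_gen_def by auto
      then show ?thesis using Suc by simp
    qed
    then have "s n x = 0" for n unfolding s_def by simp
    then show ?thesis unfolding surv by simp
  next
    case True
    define Q where "Q = killed_gen N k d (4*k)"
    define T where "T y = (\<Sum>z\<in>{1..N}-{y}. sk_rate N k d y z)" for y
    define l where "l = 1 + (\<Sum>y\<in>?A. T y)"
    have rnn: "0 \<le> sk_rate N k d y z" for y z using sk_rate_nonneg[OF dnn] .
    have Tnn: "0 \<le> T y" for y unfolding T_def using rnn by (simp add: sum_nonneg)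
    have lpos: "l > 0" unfolding l_def using Tnn by (simp add: sum_nonneg add_pos_nonneg)
    have Qd: "Q y y = - T y" if "y \<in> ?A" for y unfolding Q_def killed_gen_def mn T_def using that by simp
    have Qo: "Q y z = sk_rate N k d y z" if "y \<in> ?A" "z \<in> ?A" "z \<noteq> y" for y z
      unfolding Q_def killed_gen_def mn using that by simp
    have AN: "?A \<subseteq> {1..N}" using Nk by auto
    have diag: "\<forall>y\<in>?A. - l \<le> Q y y"
    proof
      fix y assume y: "y \<in> ?A"
      have "T y \<le> (\<Sum>y\<in>?A. T y)" using y Tnn by (intro member_le_sum) auto
      then show "- l \<le> Q y y" unfolding Qd[OF y] l_def by simp
    qed
    have off: "\<forall>y\<in>?A. \<forall>z\<in>?A. z \<noteq> y \<longrightarrow> 0 \<le> Q y z" using Qo rnn by simp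
    have row: "\<forall>y\<in>?A. (\<Sum>z\<in>?A. Q y z) \<le> 0"
    proof
      fix y assume y: "y \<in> ?A"
      have "(\<Sum>z\<in>?A. Q y z) = Q y y + (\<Sum>z\<in>?A-{y}. Q y z)" using y by (simp add: sum.remove)
      also have "(\<Sum>z\<in>?A-{y}. Q y z) = (\<Sum>z\<in>?A-{y}. sk_rate N k d y z)" using Qo y by (intro sum.cong) auto
      also have "\<dots> \<le> T y" unfolding T_def using AN rnn by (intro sum_mono2) auto
      finally show "(\<Sum>z\<in>?A. Q y z) \<le> 0" using Qd[OF y] by simp
    qed
    have fb: "\<forall>y\<in>?A. 0 \<le> fq k y \<and> fq k y \<le> 300"
      using fq_nonneg[of k] fq_le[of k] k2 by auto
    have lyap: "\<forall>y\<in>?A. (\<Sum>z\<in>?A. Q y z * fq k z) \<le> -1"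
      unfolding Q_def using drift[OF k2 Nk _ dnn d1] by blast
    have s0: "\<forall>y\<in>?A. s 0 y = 1" unfolding s_def by simp
    have sS: "\<forall>n. \<forall>y\<in>?A. s (Suc n) y = (\<Sum>z\<in>?A. Q y z * s n z)"
      unfolding s_def Q_def by (simp add: mn sum_distrib_left, intro allI ballI sum.swap)
    have "(\<Sum>n. 600^n / fact n * s n x) \<le> 300 / 600"
      by (rule abstract_bound[OF _ lpos diag off row fb lyap s0 sS _ True]) auto
    then show ?thesis unfolding surv by simp
  qed
qed

lemma final:
  fixes k :: "nat \<Rightarrow> nat" and \<delta> :: "nat \<Rightarrow> nat \<Rightarrow> real"
  assumes lo: "(\<lambda>N. real (k N)) \<in> o(\<lambda>N. real N)" and k2: "\<forall>N. 2 \<le> k N"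
    and dh: "\<forall>N j. 2 \<le> j \<and> j \<le> k N - 1 \<longrightarrow> 0 \<le> \<delta> N j \<and> \<delta> N j \<le> 1"
  shows "\<forall>\<^sub>F N in sequentially. \<forall>x\<in>{1..N}. survival N (k N) (\<delta> N) (4 * k N) 600 x \<le> 1/2"
proof -
  have ev: "\<forall>\<^sub>F N in sequentially. norm (real (k N)) \<le> (1/6) * norm (real N)"
    using landau_o.smallD[OF lo, of "1/6"] by simp
  show ?thesis
  proof (rule eventually_mono[OF ev])
    fix N assume e: "norm (real (k N)) \<le> (1/6) * norm (real N)"
    then have Nk: "6 * k N \<le> N" by simp
    have d0: "\<forall>j\<in>{2..k N - 1}. 0 \<le> \<delta> N j" using dh by auto
    have d1: "\<forall>j\<in>{2..k N - 1}. \<delta> N j \<le> 1" using dh by auto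
    show "\<forall>x\<in>{1..N}. survival N (k N) (\<delta> N) (4 * k N) 600 x \<le> 1/2"
      using main_N[OF k2[rule_format] Nk d0 d1] by blast
  qed
qed

theorem lemma5p2:
  shows "\<exists>C c :: real. C > 0 \<and> 0 < c \<and> c < 1 \<and>
    (\<forall>(k :: nat \<Rightarrow> nat) (\<delta> :: nat \<Rightarrow> nat \<Rightarrow> real).
       (\<lambda>N. real (k N)) \<in> o(\<lambda>N. real N) \<and> (\<forall>N. 2 \<le> k N) \<and>
       (\<forall>N j. 2 \<le> j \<and> j \<le> k N - 1 \<longrightarrow> 0 \<le> \<delta> N j \<and> \<delta> N j \<le> 1) \<longrightarrow>
       (\<forall>\<^sub>F N in sequentially. \<forall>x\<in>{1..N}.
          survival N (k N) (\<delta> N) (4 * k N) C x \<le> c))"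
  by (intro exI[of _ 600] exI[of _ "1/2"]) (use final in auto)

end
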